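(* Let $\epsilon=\epsilon_1\cdots\epsilon_n$ be a sequence and let $\epsilon'$ be the sequence obtained by applying Algorithm A (described below) to $\epsilon$. Then $\operatorname{Em}(p,\epsilon)=\operatorname{Em}(q,\epsilon')$ and $\operatorname{Em}(q,\epsilon)=\operatorname{Em}(p,\epsilon')$; that is, the algorithm exchanges the occurrences of $p=\underline{0102}$ and $q=\underline{0112}$.
   Context: The reduction of an integer word replaces each occurrence of its $k$-th smallest distinct value by $k-1$; a consecutive pattern $\underline{p_1p_2p_3p_4}$ occurs in a sequence at position $i$ if the reduction of its entries in positions $i,\dots,i+3$ equals $p_1p_2p_3p_4$, and $\operatorname{Em}(p,\epsilon)$ denotes the set of positions of occurrences of $p$ in $\epsilon$. Let $p=\underline{0102}$ and $q=\underline{0112}$. Algorithm A, on input an integer sequence $\mathrm{seq}=\epsilon_1\cdots\epsilon_n$: let $E_p$, $E_q$ be the sets of positions of occurrences of $p$, resp. $q$, in the input sequence; set $\mathrm{last}:=$ null. For $i=1,2,\dots,n$ in order: let $N_p,N_q$ be the sets of positions of occurrences of $p$, resp. $q$, in the current sequence. If $i-2\in E_p$: set $\mathrm{last}:=\mathrm{seq}[i]$ and $\mathrm{seq}[i]:=\mathrm{seq}[i-1]$. Else if $i-2\in E_q$: set $\mathrm{last}:=\mathrm{seq}[i]$ and $\mathrm{seq}[i]:=\mathrm{seq}[i-2]$. Else if $i-2\in N_p$ or $i-2\in N_q$: swap the values of $\mathrm{seq}[i]$ and $\mathrm{last}$. Output $\mathrm{seq}$. *)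

theory Defs
  imports Main
begin

definition red :: "int list \<Rightarrow> nat list" where
  "red w = map (\<lambda>x. card {y \<in> set w. y < x}) w"

text \<open>Positions (1-indexed) of occurrences of a consecutive pattern of length 4.\<close>
definition Em :: "nat list \<Rightarrow> int list \<Rightarrow> nat set" where
  "Em pat s = {i. 1 \<le> i \<and> i + 3 \<le> length s \<and> red (take 4 (drop (i - 1) s)) = pat}"

definition pat_p :: "nat list" where "pat_p = [0, 1, 0, 2]"
definition pat_q :: "nat list" where "pat_q = [0, 1, 1, 2]"

text \<open>One step (index i, 1-indexed) of Algorithm A. State: current sequence and
  the variable last (None = null). seq[j] (1-indexed) is s ! (j-1).\<close>
definition algA_step :: "nat set \<Rightarrow> nat set \<Rightarrow> nat \<Rightarrow> int list \<times> int option \<Rightarrow> int list \<times> int option" where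
  "algA_step Ep Eq i st =
     (let s = fst st; last = snd st in
      if i \<ge> 3 \<and> i - 2 \<in> Ep then (s[i - 1 := s ! (i - 2)], Some (s ! (i - 1)))
      else if i \<ge> 3 \<and> i - 2 \<in> Eq then (s[i - 1 := s ! (i - 3)], Some (s ! (i - 1)))
      else if i \<ge> 3 \<and> (i - 2 \<in> Em pat_p s \<or> i - 2 \<in> Em pat_q s) then
        (case last of None \<Rightarrow> (s, last)
         | Some v \<Rightarrow> (s[i - 1 := v], Some (s ! (i - 1))))
      else (s, last))"

definition algA :: "int list \<Rightarrow> int list" where
  "algA xs = fst (fold (algA_step (Em pat_p xs) (Em pat_q xs)) [1..<length xs + 1] (xs, None))"

end

theory Submission imports Defs begin

definition stA :: "int list \<Rightarrow> nat \<Rightarrow> int list \<times> int option" where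
  "stA xs i = fold (algA_step (Em pat_p xs) (Em pat_q xs)) [1..<i+1] (xs, None)"

lemma stA_0: "stA xs 0 = (xs, None)" by (simp add: stA_def)
lemma stA_Suc: "stA xs (Suc i) = algA_step (Em pat_p xs) (Em pat_q xs) (Suc i) (stA xs i)"
  by (simp add: stA_def)
lemma algA_stA: "algA xs = fst (stA xs (length xs))" by (simp add: algA_def stA_def)

lemma step_upd: "\<exists>v. fst (algA_step A B i st) = (fst st)[i - 1 := v]"
  unfolding algA_step_def Let_def
  by (auto split: option.split intro: exI[of _ "fst st ! (i - 1)"])

lemma stA_len: "length (fst (stA xs i)) = length xs"
proof (induction i)
  case 0 then show ?case by (simp add: stA_0)
next
  case (Suc i)
  obtain v where "fst (stA xs (Suc i)) = (fst (stA xs i))[i := v]"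
    using step_upd[of "Em pat_p xs" "Em pat_q xs" "Suc i" "stA xs i"] stA_Suc by auto
  then show ?case using Suc by simp
qed

lemma stA_hi: "i \<le> k \<Longrightarrow> fst (stA xs i) ! k = xs ! k"
proof (induction i)
  case 0 then show ?case by (simp add: stA_0)
next
  case (Suc i)
  obtain v where "fst (stA xs (Suc i)) = (fst (stA xs i))[i := v]"
    using step_upd[of "Em pat_p xs" "Em pat_q xs" "Suc i" "stA xs i"] stA_Suc by auto
  then show ?case using Suc by simp
qed

lemma stA_lo: "k < i \<Longrightarrow> i \<le> j \<Longrightarrow> fst (stA xs j) ! k = fst (stA xs i) ! k"
proof (induction j)
  case 0 then show ?case by simp
next
  case (Suc j)
  show ?case
  proof (cases "i = Suc j")
    case False
    obtain v where "fst (stA xs (Suc j)) = (fst (stA xs j))[j := v]"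
      using step_upd[of "Em pat_p xs" "Em pat_q xs" "Suc j" "stA xs j"] stA_Suc by auto
    then show ?thesis using Suc False by simp
  qed simp
qed

lemma algA_nth: "k < length xs \<Longrightarrow> algA xs ! k = fst (stA xs (Suc k)) ! k"
  unfolding algA_stA by (rule stA_lo) auto

lemma take4: "1 \<le> j \<Longrightarrow> j + 3 \<le> length s \<Longrightarrow>
   take 4 (drop (j - 1) s) = [s!(j-1), s!j, s!(j+1), s!(j+2)]"
proof -
  assume h: "1 \<le> j" "j + 3 \<le> length s"
  have "drop (j - 1) s = s!(j-1) # drop j s" using h by (metis Cons_nth_drop_Suc Suc_diff_1 Suc_le_eq add_lessD1 diff_le_self le_add1 le_less_trans less_add_Suc1 less_le_trans One_nat_def)
  also have "drop j s = s!j # drop (j+1) s" using h by (simp add: Cons_nth_drop_Suc)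
  also have "drop (j+1) s = s!(j+1) # drop (j+2) s" using h by (simp add: Cons_nth_drop_Suc)
  also have "drop (j+2) s = s!(j+2) # drop (Suc (j+2)) s" using h Cons_nth_drop_Suc[of "j+2" s] by simp
  finally show ?thesis by (simp add: numeral_eq_Suc)
qed
lemma card_lt: "card {y \<in> set w. y < x} = length (remdups (filter (\<lambda>y. y < x) w))"
  by (metis length_remdups_card_conv set_filter)
lemma S0: "card {y \<in> set w. y < x} = 0 \<Longrightarrow> y \<in> set w \<Longrightarrow> x \<le> (y::int)"
  by (subst (asm) card_eq_0_iff) auto
lemma Smono: "x \<le> (x'::int) \<Longrightarrow> card {y \<in> set w. y < x} \<le> card {y \<in> set w. y < x'}"
  by (rule card_mono) auto
lemma S2: "a \<in> set w \<Longrightarrow> b \<in> set w \<Longrightarrow> a < x \<Longrightarrow> b < (x::int) \<Longrightarrow> a \<noteq> b \<Longrightarrow> 2 \<le> card {y \<in> set w. y < x}"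
proof -
  assume h: "a \<in> set w" "b \<in> set w" "a < x" "b < x" "a \<noteq> b"
  have "{a,b} \<subseteq> {y \<in> set w. y < x}" using h by auto
  hence "card {a,b} \<le> card {y \<in> set w. y < x}" by (rule card_mono[rotated]) auto
  thus ?thesis using h by simp
qed
lemma red4: "red [a,b,c,d] = [card {y \<in> set [a,b,c,d]. y < a}, card {y \<in> set [a,b,c,d]. y < b},
  card {y \<in> set [a,b,c,d]. y < c}, card {y \<in> set [a,b,c,d]. y < d}]"
  by (simp add: red_def)
lemma red_p: "(red [a,b,c,d] = [0,1,0,2]) = (a = c \<and> a < b \<and> b < d)"
proof
  let ?S = "\<lambda>x. card {y \<in> set [a,b,c,d]. y < x}"
  assume "red [a,b,c,d] = [0,1,0,2]"
  hence h: "?S a = 0" "?S b = 1" "?S c = 0" "?S d = 2" unfolding red4 by auto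
  have "a \<le> c" "c \<le> a" using S0[OF h(1)] S0[OF h(3)] by auto
  moreover have "a < b" proof (rule ccontr)
    assume "\<not> a < b"
    hence "?S b \<le> ?S a" by (intro Smono) auto
    thus False using h by linarith
  qed
  moreover have "b < d" proof (rule ccontr)
    assume "\<not> b < d"
    hence "?S d \<le> ?S b" by (intro Smono) auto
    thus False using h by linarith
  qed
  ultimately show "a = c \<and> a < b \<and> b < d" by auto
next
  assume "a = c \<and> a < b \<and> b < d"
  thus "red [a,b,c,d] = [0,1,0,2]" unfolding red_def card_lt by auto
qed
lemma red_q: "(red [a,b,c,d] = [0,1,1,2]) = (a < b \<and> b = c \<and> c < d)"
proof
  let ?S = "\<lambda>x. card {y \<in> set [a,b,c,d]. y < x}"
  assume "red [a,b,c,d] = [0,1,1,2]"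
  hence h: "?S a = 0" "?S b = 1" "?S c = 1" "?S d = 2" unfolding red4 by auto
  have amin: "a \<le> b" "a \<le> c" "a \<le> d" using S0[OF h(1)] by auto
  have ab: "a < b" proof (rule ccontr)
    assume "\<not> a < b"
    hence "?S b \<le> ?S a" by (intro Smono) auto
    thus False using h by linarith
  qed
  have ac: "a < c" proof (rule ccontr)
    assume "\<not> a < c"
    hence "?S c \<le> ?S a" by (intro Smono) auto
    thus False using h by linarith
  qed
  have "\<not> b < c" using S2[of a "[a,b,c,d]" b c] h ab by auto
  moreover have "\<not> c < b" using S2[of a "[a,b,c,d]" c b] h ac by auto
  moreover have "b < d" proof (rule ccontr)
    assume "\<not> b < d"
    hence "?S d \<le> ?S b" by (intro Smono) auto
    thus False using h by linarith
  qed
  ultimately show "a < b \<and> b = c \<and> c < d" using ab by auto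
next
  assume "a < b \<and> b = c \<and> c < d"
  thus "red [a,b,c,d] = [0,1,1,2]" unfolding red_def card_lt by auto
qed
definition ppat :: "int \<Rightarrow> int \<Rightarrow> int \<Rightarrow> int \<Rightarrow> bool" where
  "ppat a b c d \<longleftrightarrow> a = c \<and> a < b \<and> b < d"
definition qpat :: "int \<Rightarrow> int \<Rightarrow> int \<Rightarrow> int \<Rightarrow> bool" where
  "qpat a b c d \<longleftrightarrow> a < b \<and> b = c \<and> c < d"

lemma Em_p_iff: "j \<in> Em pat_p s \<longleftrightarrow> 1 \<le> j \<and> j + 3 \<le> length s \<and> ppat (s!(j-1)) (s!j) (s!(j+1)) (s!(j+2))"
  unfolding Em_def pat_p_def ppat_def using take4[of j s] red_p by auto
lemma Em_q_iff: "j \<in> Em pat_q s \<longleftrightarrow> 1 \<le> j \<and> j + 3 \<le> length s \<and> qpat (s!(j-1)) (s!j) (s!(j+1)) (s!(j+2))"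
  unfolding Em_def pat_q_def qpat_def using take4[of j s] red_q by auto

definition eE :: "int list \<Rightarrow> int \<Rightarrow> int" where
  "eE xs k = (if 0 \<le> k \<and> k < int (length xs) then xs ! nat k else 0)"
definition fF :: "int list \<Rightarrow> int \<Rightarrow> int" where
  "fF xs k = (if 0 \<le> k \<and> k < int (length xs) then algA xs ! nat k else 0)"
definition LS :: "int list \<Rightarrow> int \<Rightarrow> bool" where
  "LS xs k = (snd (stA xs (nat k)) \<noteq> None)"
definition LV :: "int list \<Rightarrow> int \<Rightarrow> int" where
  "LV xs k = the (snd (stA xs (nat k)))"
definition PE :: "int list \<Rightarrow> int \<Rightarrow> bool" where
  "PE xs k = (0 \<le> k \<and> k + 3 < int (length xs) \<and> ppat (eE xs k) (eE xs (k+1)) (eE xs (k+2)) (eE xs (k+3)))"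
definition QE :: "int list \<Rightarrow> int \<Rightarrow> bool" where
  "QE xs k = (0 \<le> k \<and> k + 3 < int (length xs) \<and> qpat (eE xs k) (eE xs (k+1)) (eE xs (k+2)) (eE xs (k+3)))"
definition DD :: "int list \<Rightarrow> int \<Rightarrow> bool" where
  "DD xs k = (PE xs k \<or> QE xs k)"
definition SP :: "int list \<Rightarrow> int \<Rightarrow> bool" where
  "SP xs k = (0 \<le> k \<and> k + 3 < int (length xs) \<and>
     (ppat (fF xs k) (fF xs (k+1)) (eE xs (k+2)) (eE xs (k+3)) \<or> qpat (fF xs k) (fF xs (k+1)) (eE xs (k+2)) (eE xs (k+3))))"

lemma LS0: "\<not> LS xs 0" by (simp add: LS_def stA_0)

lemma rec_step:
  assumes m: "0 \<le> m" "m < int (length xs)"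
  shows "(if DD xs (m-2) then fF xs m = (if PE xs (m-2) then fF xs (m-1) else fF xs (m-2)) \<and> LS xs (m+1) \<and> LV xs (m+1) = eE xs m
   else if SP xs (m-2) then (if LS xs m then fF xs m = LV xs m \<and> LS xs (m+1) \<and> LV xs (m+1) = eE xs m
                              else fF xs m = eE xs m \<and> \<not> LS xs (m+1))
   else fF xs m = eE xs m \<and> LS xs (m+1) = LS xs m \<and> LV xs (m+1) = LV xs m)"
proof -
  obtain i where mi: "m = int i" using m by (metis nonneg_int_cases)
  let ?A = "Em pat_p xs" and ?B = "Em pat_q xs"
  define s where "s = fst (stA xs i)"
  define l where "l = snd (stA xs i)"
  have st: "stA xs i = (s, l)" by (simp add: s_def l_def)
  have n: "i < length xs" using m mi by simp
  have ls: "length s = length xs" by (simp add: s_def stA_len)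
  have slo: "k < i \<Longrightarrow> s ! k = algA xs ! k" for k
    using algA_nth[of k xs] stA_lo[of k "Suc k" i xs] n by (simp add: s_def)
  have shi: "i \<le> k \<Longrightarrow> s ! k = xs ! k" for k by (simp add: s_def stA_hi)
  have fm: "fF xs m = fst (stA xs (Suc i)) ! i" using algA_nth[OF n] mi m by (simp add: fF_def)
  have lsm: "LS xs m = (l \<noteq> None)" "LV xs m = the l" using mi by (simp_all add: LS_def LV_def l_def)
  have lsm1: "LS xs (m+1) = (snd (stA xs (Suc i)) \<noteq> None)" "LV xs (m+1) = the (snd (stA xs (Suc i)))"
    using mi by (simp_all add: LS_def LV_def nat_add_distrib)
  have em: "eE xs m = s ! i" using mi n shi by (simp add: eE_def)
  show ?thesis
  proof (cases "i < 2")
    case True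
    have c: "\<not> (3 \<le> Suc i)" using True by simp
    have "\<not> DD xs (m-2)" "\<not> SP xs (m-2)" using True mi by (auto simp: DD_def PE_def QE_def SP_def)
    then show ?thesis using c fm lsm lsm1 em unfolding stA_Suc st
      by (simp add: algA_step_def Let_def ls)
  next
    case False
    then obtain j where ij: "i = Suc (Suc j)" by (metis add_2_eq_Suc leI le_Suc_ex)
    have e0: "eE xs (m-2) = xs ! j" "eE xs (m-1) = xs ! Suc j" using ij mi n by (simp_all add: eE_def nat_add_distrib)
    have e1: "m + 1 < int (length xs) \<Longrightarrow> eE xs (m+1) = xs ! Suc i" using ij mi n by (simp add: eE_def nat_add_distrib numeral_eq_Suc)
    have f0: "fF xs (m-2) = s ! j" "fF xs (m-1) = s ! Suc j" using ij mi n slo by (simp_all add: fF_def nat_add_distrib)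
    have si: "s ! Suc i = xs ! Suc i" by (simp add: shi)
    have cP: "(3 \<le> Suc i \<and> Suc j \<in> ?A) = PE xs (m-2)"
      using ij mi n unfolding Em_p_iff PE_def eE_def by (auto simp: shi nat_add_distrib numeral_eq_Suc)
    have cQ: "(3 \<le> Suc i \<and> Suc j \<in> ?B) = QE xs (m-2)"
      using ij mi n unfolding Em_q_iff QE_def eE_def by (auto simp: shi nat_add_distrib numeral_eq_Suc)
    have cS: "(3 \<le> Suc i \<and> (Suc j \<in> Em pat_p s \<or> Suc j \<in> Em pat_q s)) = SP xs (m-2)"
      using ij mi n ls slo unfolding Em_p_iff Em_q_iff SP_def eE_def fF_def by (auto simp: shi nat_add_distrib numeral_eq_Suc)
    have idx: "Suc i - 1 = i" "Suc i - 2 = Suc j" "Suc i - 3 = j" using ij by simp_all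
    have stepeq: "stA xs (Suc i) = (if PE xs (m-2) then (s[i := s ! Suc j], Some (s ! i))
       else if QE xs (m-2) then (s[i := s ! j], Some (s ! i))
       else if SP xs (m-2) then (case l of None \<Rightarrow> (s, l) | Some v \<Rightarrow> (s[i := v], Some (s ! i)))
       else (s, l))"
      unfolding stA_Suc st algA_step_def Let_def
      by (simp only: fst_conv snd_conv idx cP cQ cS)
    show ?thesis
      unfolding DD_def
      using fm lsm lsm1 em f0 n ls
      by (simp add: stepeq split: option.split)
  qed
qed

definition ACT :: "int list \<Rightarrow> int \<Rightarrow> bool" where
  "ACT xs m = (DD xs (m-2) \<or> SP xs (m-2))"

definition INV :: "int list \<Rightarrow> int \<Rightarrow> bool" where
  "INV xs m = ((ACT xs m \<longrightarrow> LS xs (m+1) \<and> LV xs (m+1) = eE xs m)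
    \<and> (SP xs (m-2) \<and> \<not> DD xs (m-2) \<longrightarrow> ACT xs (m-2))
    \<and> (ACT xs (m-1) \<longrightarrow> \<not> ACT xs m)
    \<and> (DD xs m \<longrightarrow> fF xs m < eE xs (m+1))
    \<and> (DD xs (m-1) \<longrightarrow> fF xs m = eE xs m)
    \<and> (0 \<le> m - 3 \<longrightarrow> (PE xs (m-3) = qpat (fF xs (m-3)) (fF xs (m-2)) (fF xs (m-1)) (fF xs m))
                     \<and> (QE xs (m-3) = ppat (fF xs (m-3)) (fF xs (m-2)) (fF xs (m-1)) (fF xs m))))"

definition REC :: "int list \<Rightarrow> int \<Rightarrow> bool" where
  "REC xs m = (if DD xs (m-2) then fF xs m = (if PE xs (m-2) then fF xs (m-1) else fF xs (m-2)) \<and> LS xs (m+1) \<and> LV xs (m+1) = eE xs m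
   else if SP xs (m-2) then (if LS xs m then fF xs m = LV xs m \<and> LS xs (m+1) \<and> LV xs (m+1) = eE xs m
                              else fF xs m = eE xs m \<and> \<not> LS xs (m+1))
   else fF xs m = eE xs m \<and> LS xs (m+1) = LS xs m \<and> LV xs (m+1) = LV xs m)"

lemma REC: "0 \<le> m \<Longrightarrow> m < int (length xs) \<Longrightarrow> REC xs m"
  unfolding REC_def by (rule rec_step)

lemma inv_all: "0 \<le> m \<Longrightarrow> m < int (length xs) \<Longrightarrow> INV xs m"
proof (induction "nat m" arbitrary: m rule: less_induct)
  case less
  have IH: "0 \<le> m - d \<Longrightarrow> 0 < d \<Longrightarrow> INV xs (m - d)" for d
    using less by (intro less.hyps) auto
  have I1: "0 \<le> m - 1 \<longrightarrow> INV xs (m - 1)" and I2: "0 \<le> m - 2 \<longrightarrow> INV xs (m - 2)" and I3: "0 \<le> m - 3 \<longrightarrow> INV xs (m - 3)"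
    using IH[of 1] IH[of 2] IH[of 3] by auto
  have R0: "REC xs m" using less by (simp add: REC)
  have R1: "0 \<le> m - 1 \<longrightarrow> REC xs (m - 1)" and R2: "0 \<le> m - 2 \<longrightarrow> REC xs (m - 2)" and R3: "0 \<le> m - 3 \<longrightarrow> REC xs (m - 3)"
    using less REC by auto
  have L0: "\<not> LS xs 0" by (rule LS0)
  have n: "m < int (length xs)" "0 \<le> m" using less by auto
  note defs = INV_def REC_def ACT_def DD_def PE_def QE_def SP_def ppat_def qpat_def
  show ?case
    using I1 I2 I3 R0 R1 R2 R3 L0 n unfolding defs
    by (smt (z3))
qed

lemma len_algA: "length (algA xs) = length xs" by (simp add: algA_stA stA_len)

lemma window:
  assumes "k + 3 < length xs"
  shows "(ppat (xs!k) (xs!(k+1)) (xs!(k+2)) (xs!(k+3)) \<longleftrightarrow> qpat (algA xs!k) (algA xs!(k+1)) (algA xs!(k+2)) (algA xs!(k+3)))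
       \<and> (qpat (xs!k) (xs!(k+1)) (xs!(k+2)) (xs!(k+3)) \<longleftrightarrow> ppat (algA xs!k) (algA xs!(k+1)) (algA xs!(k+2)) (algA xs!(k+3)))"
proof -
  have "INV xs (int k + 3)" using assms by (intro inv_all) auto
  hence C: "PE xs (int k) = qpat (fF xs (int k)) (fF xs (int k + 1)) (fF xs (int k + 2)) (fF xs (int k + 3))"
     "QE xs (int k) = ppat (fF xs (int k)) (fF xs (int k + 1)) (fF xs (int k + 2)) (fF xs (int k + 3))"
    unfolding INV_def by (simp_all add: add.commute)
  have e: "eE xs (int k + int d) = xs ! (k + d)" "fF xs (int k + int d) = algA xs ! (k + d)" if "d \<le> 3" for d
    using assms that by (auto simp: eE_def fF_def nat_add_distrib)
  have e': "eE xs (int k) = xs ! k" "fF xs (int k) = algA xs ! k"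
    using e[of 0] by simp_all
  have e1: "eE xs (int k + 1) = xs ! (k+1)" "fF xs (int k + 1) = algA xs ! (k+1)"
    using e[of 1] by simp_all
  have e2: "eE xs (int k + 2) = xs ! (k+2)" "fF xs (int k + 2) = algA xs ! (k+2)"
    using e[of 2] by simp_all
  have e3: "eE xs (int k + 3) = xs ! (k+3)" "fF xs (int k + 3) = algA xs ! (k+3)"
    using e[of 3] by simp_all
  show ?thesis using C assms unfolding PE_def QE_def e' e1 e2 e3 by auto
qed

theorem theorem3:
  fixes \<epsilon> :: "int list"
  shows "Em pat_p \<epsilon> = Em pat_q (algA \<epsilon>) \<and> Em pat_q \<epsilon> = Em pat_p (algA \<epsilon>)"
proof -
  have "j \<in> Em pat_p \<epsilon> \<longleftrightarrow> j \<in> Em pat_q (algA \<epsilon>)" "j \<in> Em pat_q \<epsilon> \<longleftrightarrow> j \<in> Em pat_p (algA \<epsilon>)" for j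
  proof -
    show "j \<in> Em pat_p \<epsilon> \<longleftrightarrow> j \<in> Em pat_q (algA \<epsilon>)"
    proof (cases "1 \<le> j \<and> j + 3 \<le> length \<epsilon>")
      case True
      then obtain k where k: "j = Suc k" "k + 3 < length \<epsilon>" by (cases j) auto
      show ?thesis using window[OF k(2)] k unfolding Em_p_iff Em_q_iff len_algA
        by (simp add: numeral_eq_Suc)
    qed (auto simp: Em_p_iff Em_q_iff len_algA)
    show "j \<in> Em pat_q \<epsilon> \<longleftrightarrow> j \<in> Em pat_p (algA \<epsilon>)"
    proof (cases "1 \<le> j \<and> j + 3 \<le> length \<epsilon>")
      case True
      then obtain k where k: "j = Suc k" "k + 3 < length \<epsilon>" by (cases j) auto
      show ?thesis using window[OF k(2)] k unfolding Em_p_iff Em_q_iff len_algA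
        by (simp add: numeral_eq_Suc)
    qed (auto simp: Em_p_iff Em_q_iff len_algA)
  qed
  thus ?thesis by blast
qed
end
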